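(* Suppose $U\subseteq\mathbb{H}^d$ is $r$-connected and has subexponential growth. Then $U$ is a quasi-convex quasi-tree. Specifically, there is some $s=s(r)$ such that for every sequence $x=x_0,x_1,\dots,x_m=y$ in $U$ with $d(x_i,x_{i+1})\leq r$ for all $0\leq i<m$, and every point $p$ on the geodesic $[x,y]$, some $x_i$ is within distance $s$ of $p$.
   Context: $U$ is $r$-connected if any two points of $U$ are joined by a sequence in $U$ with consecutive distances $\leq r$. $U$ has subexponential growth if $\lim_{t\to\infty}\frac1t\log\sup_{u\in U}|U\cap B(u,t)|=0$ (for $U$ uniformly discrete), with distances in $\mathbb{H}^d$. *)

theory Defs
  imports "HOL-Analysis.Analysis"
begin

text \<open>Hyperbolic space H^d in the Poincare ball model: the open unit ball of a
Euclidean space 'a with d = DIM('a), with the hyperbolic distance.\<close>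

definition hyp_space :: "'a::euclidean_space set" where
  "hyp_space = ball 0 1"

definition hdist :: "'a::euclidean_space \<Rightarrow> 'a \<Rightarrow> real" where
  "hdist x y = arcosh (1 + 2 * (norm (x - y))\<^sup>2 / ((1 - (norm x)\<^sup>2) * (1 - (norm y)\<^sup>2)))"

definition hball :: "'a::euclidean_space \<Rightarrow> real \<Rightarrow> 'a set" where
  "hball u t = {v \<in> hyp_space. hdist u v \<le> t}"

text \<open>The geodesic segment [x,y]: union of images of all geodesics from x to y,
i.e. isometric embeddings of [0, d(x,y)] (unique in H^d).\<close>
definition geodesic_seg :: "'a::euclidean_space \<Rightarrow> 'a \<Rightarrow> 'a set" where
  "geodesic_seg x y = \<Union>{\<gamma> ` {0..hdist x y} | \<gamma>.
      \<gamma> 0 = x \<and> \<gamma> (hdist x y) = y \<and>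
      (\<forall>s\<in>{0..hdist x y}. \<gamma> s \<in> hyp_space) \<and>
      (\<forall>s\<in>{0..hdist x y}. \<forall>t\<in>{0..hdist x y}. hdist (\<gamma> s) (\<gamma> t) = \<bar>s - t\<bar>)}"

definition r_connected :: "'a::euclidean_space set \<Rightarrow> real \<Rightarrow> bool" where
  "r_connected U r \<longleftrightarrow> (\<forall>x\<in>U. \<forall>y\<in>U. \<exists>(m::nat) (xs::nat \<Rightarrow> 'a).
      xs 0 = x \<and> xs m = y \<and> (\<forall>i\<le>m. xs i \<in> U) \<and> (\<forall>i<m. hdist (xs i) (xs (Suc i)) \<le> r))"

definition uniformly_discrete :: "'a::euclidean_space set \<Rightarrow> bool" where
  "uniformly_discrete U \<longleftrightarrow> (\<exists>\<delta>>0. \<forall>u\<in>U. \<forall>v\<in>U. u \<noteq> v \<longrightarrow> \<delta> \<le> hdist u v)"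

definition subexp_growth :: "'a::euclidean_space set \<Rightarrow> bool" where
  "subexp_growth U \<longleftrightarrow> uniformly_discrete U \<and>
     ((\<lambda>t. ln (SUP u\<in>U. real (card (U \<inter> hball u t))) / t) \<longlongrightarrow> 0) at_top"

end

theory Submission
  imports Defs
begin

lemma hs_norm: "x \<in> hyp_space \<Longrightarrow> norm x < 1"
  by (simp add: hyp_space_def)

lemma hs_den: "x \<in> hyp_space \<Longrightarrow> 0 < 1 - (norm x)^2"
proof -
  assume "x \<in> hyp_space"
  then have "norm x < 1" by (rule hs_norm)
  then have "(norm x)^2 < 1" by (simp add: power_less_one_iff abs_square_less_1)
  then show ?thesis by simp
qed

definition chd :: "'a::euclidean_space \<Rightarrow> 'a \<Rightarrow> real" where
  "chd x y = 1 + 2 * (norm (x - y))\<^sup>2 / ((1 - (norm x)\<^sup>2) * (1 - (norm y)\<^sup>2))"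

lemma chd_ge1: "x \<in> hyp_space \<Longrightarrow> y \<in> hyp_space \<Longrightarrow> chd x y \<ge> 1"
  using hs_den[of x] hs_den[of y] unfolding chd_def
  by (simp add: zero_le_divide_iff)

lemma cosh_hdist: "x \<in> hyp_space \<Longrightarrow> y \<in> hyp_space \<Longrightarrow> cosh (hdist x y) = chd x y"
  using chd_ge1[of x y] unfolding hdist_def chd_def[symmetric] by simp

lemma hdist_nonneg: "x \<in> hyp_space \<Longrightarrow> y \<in> hyp_space \<Longrightarrow> hdist x y \<ge> 0"
  using chd_ge1[of x y] unfolding hdist_def chd_def[symmetric] by simp

lemma hdist_sym: "hdist x y = hdist y x"
  unfolding hdist_def by (simp add: norm_minus_commute mult.commute)

lemma hdist_self: "hdist x x = 0"
  unfolding hdist_def by simp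

definition h0 :: "'a::euclidean_space \<Rightarrow> real" where
  "h0 x = (1 + (norm x)^2) / (1 - (norm x)^2)"
definition hv :: "'a::euclidean_space \<Rightarrow> 'a" where
  "hv x = (2 / (1 - (norm x)^2)) *\<^sub>R x"

lemma h0_sq: "x \<in> hyp_space \<Longrightarrow> (h0 x)^2 = 1 + (norm (hv x))^2"
proof -
  assume x: "x \<in> hyp_space"
  define a where "a = 1 - (norm x)^2"
  have a: "a > 0" using hs_den[OF x] a_def by simp
  have "(h0 x)^2 = (1 + (norm x)^2)^2 / a^2" unfolding h0_def a_def by (simp add: power_divide)
  also have "(1 + (norm x)^2)^2 = a^2 + 4 * (norm x)^2" unfolding a_def by algebra
  also have "(a^2 + 4 * (norm x)^2) / a^2 = 1 + (norm (hv x))^2"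
    unfolding hv_def a_def[symmetric] using a by (simp add: field_simps power2_eq_square)
  finally show ?thesis .
qed

lemma h0_pos: "x \<in> hyp_space \<Longrightarrow> h0 x > 0"
  using hs_den[of x] unfolding h0_def by (simp add: add_pos_nonneg)

lemma chd_h: "x \<in> hyp_space \<Longrightarrow> y \<in> hyp_space \<Longrightarrow> chd x y = h0 x * h0 y - hv x \<bullet> hv y"
proof -
  assume x: "x \<in> hyp_space" and y: "y \<in> hyp_space"
  define a where "a = 1 - (norm x)^2"
  define b where "b = 1 - (norm y)^2"
  have a: "a > 0" using hs_den[OF x] a_def by simp
  have b: "b > 0" using hs_den[OF y] b_def by simp
  have n: "(norm (x - y))^2 = (norm x)^2 + (norm y)^2 - 2 * (x \<bullet> y)"
    by (simp add: power2_norm_eq_inner inner_diff_left inner_diff_right inner_commute)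
  have "chd x y = (a * b + 2 * ((norm x)^2 + (norm y)^2 - 2 * (x \<bullet> y))) / (a * b)"
    unfolding chd_def n a_def[symmetric] b_def[symmetric] using a b by (simp add: field_simps)
  also have "\<dots> = ((1 + (norm x)^2) * (1 + (norm y)^2) - 4 * (x \<bullet> y)) / (a * b)"
    unfolding a_def b_def by (simp add: algebra_simps)
  also have "\<dots> = h0 x * h0 y - hv x \<bullet> hv y"
    unfolding h0_def hv_def a_def[symmetric] b_def[symmetric] using a b
    by (simp add: field_simps)
  finally show ?thesis .
qed

lemma key_abs:
  fixes P X Y :: "'a::euclidean_space" and P0 X0 Y0 bX bY :: real
  assumes P0: "P0 > 0" "P0^2 = 1 + (norm P)^2"
    and X0: "X0^2 = 1 + (norm X)^2" and Y0: "Y0^2 = 1 + (norm Y)^2"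
    and bX: "bX = P0 * X0 - P \<bullet> X" "bX > 0"
    and bY: "bY = P0 * Y0 - P \<bullet> Y" "bY > 0"
  shows "2 * (X0 * Y0 - X \<bullet> Y) / (bX * bY) =
     (norm (((1/bX) *\<^sub>R X - P - ((1/(P0*(P0+1))) * (P \<bullet> ((1/bX) *\<^sub>R X - P))) *\<^sub>R P)
          - ((1/bY) *\<^sub>R Y - P - ((1/(P0*(P0+1))) * (P \<bullet> ((1/bY) *\<^sub>R Y - P))) *\<^sub>R P)))^2
      + 1 / bX^2 + 1 / bY^2"
proof -
  define lam where "lam = 1/(P0*(P0+1))"
  define V where "V e = e - (lam * (P \<bullet> e)) *\<^sub>R P" for e
  define u where "u = (1/bX) *\<^sub>R X - P"
  define v where "v = (1/bY) *\<^sub>R Y - P"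
  have Vn: "(norm (V e))^2 = (norm e)^2 - (P \<bullet> e)^2 / P0^2" for e
  proof -
    have "(norm (V e))^2 = (norm e)^2 - (P \<bullet> e)^2 * (2 * lam - lam^2 * (norm P)^2)"
      unfolding V_def power2_norm_eq_inner
      by (simp add: inner_diff_left inner_diff_right inner_commute algebra_simps power2_eq_square)
    also have "2 * lam - lam^2 * (norm P)^2 = 1 / P0^2"
    proof -
      have n: "(norm P)^2 = P0^2 - 1" using P0 by simp
      have "2 * lam - lam^2 * (P0^2 - 1) = 1 / P0^2" 
      proof -
        have q: "P0 + 1 > 0" "P0 * (P0 + 1) > 0" using P0(1) by auto
        have "lam * (P0 * (P0 + 1)) = 1" unfolding lam_def using q P0(1) by simp
        then have "lam = 1 / (P0 * (P0 + 1))" using q by (simp add: field_simps)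
        then show ?thesis using q P0(1) by (simp add: field_simps power2_eq_square) algebra
      qed
      then show ?thesis using n by simp
    qed
    finally show ?thesis by simp
  qed
  have Vlin: "V u - V v = V (u - v)"
    unfolding V_def by (simp add: inner_diff_right algebra_simps)
  define u0 where "u0 = X0 / bX - P0"
  define v0 where "v0 = Y0 / bY - P0"
  have Xs: "X0 / bX = P0 + u0" "(1/bX) *\<^sub>R X = P + u" unfolding u0_def u_def by auto
  have Ys: "Y0 / bY = P0 + v0" "(1/bY) *\<^sub>R Y = P + v" unfolding v0_def v_def by auto
  have pu: "P0 * u0 = P \<bullet> u"
  proof -
    have "P0 * u0 = (P0 * X0) / bX - P0^2" unfolding u0_def by (simp add: algebra_simps power2_eq_square)
    also have "P0 * X0 = bX + P \<bullet> X" using bX by simp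
    also have "(bX + P \<bullet> X) / bX - P0^2 = (P \<bullet> X) / bX - (norm P)^2"
      using bX(2) P0 by (simp add: field_simps)
    also have "\<dots> = P \<bullet> u" unfolding u_def
      by (simp add: inner_diff_right power2_norm_eq_inner)
    finally show ?thesis .
  qed
  have pv: "P0 * v0 = P \<bullet> v"
  proof -
    have "P0 * v0 = (P0 * Y0) / bY - P0^2" unfolding v0_def by (simp add: algebra_simps power2_eq_square)
    also have "P0 * Y0 = bY + P \<bullet> Y" using bY by simp
    also have "(bY + P \<bullet> Y) / bY - P0^2 = (P \<bullet> Y) / bY - (norm P)^2"
      using bY(2) P0 by (simp add: field_simps)
    also have "\<dots> = P \<bullet> v" unfolding v_def
      by (simp add: inner_diff_right power2_norm_eq_inner)
    finally show ?thesis .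
  qed
  have u0e: "u0 = (P \<bullet> u) / P0" using pu P0(1) by (simp add: field_simps)
  have v0e: "v0 = (P \<bullet> v) / P0" using pv P0(1) by (simp add: field_simps)
  have PP: "P \<bullet> P = P0^2 - 1" using P0 by (simp add: power2_norm_eq_inner)
  have main: "(X0 * Y0 - X \<bullet> Y) / (bX * bY) = 1 + (P \<bullet> u) * (P \<bullet> v) / P0^2 - u \<bullet> v"
  proof -
    have "(X0 * Y0 - X \<bullet> Y) / (bX * bY) = (X0/bX) * (Y0/bY) - ((1/bX) *\<^sub>R X) \<bullet> ((1/bY) *\<^sub>R Y)"
      using bX(2) bY(2) by (simp add: field_simps)
    also have "\<dots> = (P0 + u0) * (P0 + v0) - (P + u) \<bullet> (P + v)" using Xs Ys by simp
    also have "\<dots> = P0^2 - P \<bullet> P + (P0 * u0 - P \<bullet> u) + (P0 * v0 - P \<bullet> v) + u0 * v0 - u \<bullet> v"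
      by (simp add: inner_add_left inner_add_right algebra_simps power2_eq_square inner_commute)
    also have "\<dots> = 1 + u0 * v0 - u \<bullet> v" using pu pv PP by simp
    also have "u0 * v0 = (P \<bullet> u) * (P \<bullet> v) / P0^2" using u0e v0e by (simp add: power2_eq_square)
    finally show ?thesis .
  qed
  have ax: "1 / bX^2 = 1 + (P \<bullet> u)^2 / P0^2 - (norm u)^2"
  proof -
    have "1 / bX^2 = (X0^2 - (norm X)^2) / bX^2" using X0 by simp
    also have "\<dots> = (X0/bX)^2 - (norm ((1/bX) *\<^sub>R X))^2"
      using bX(2) by (simp add: power_divide diff_divide_distrib power_mult_distrib)
    also have "\<dots> = (P0 + u0)^2 - (norm (P + u))^2" using Xs by simp
    also have "\<dots> = P0^2 - P \<bullet> P + 2 * (P0 * u0 - P \<bullet> u) + u0^2 - (norm u)^2"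
    proof -
      have "(norm (P + u))^2 = P \<bullet> P + 2 * (P \<bullet> u) + (norm u)^2"
        unfolding power2_norm_eq_inner by (simp add: inner_add_left inner_add_right inner_commute)
      then show ?thesis by (simp add: power2_eq_square algebra_simps)
    qed
    also have "\<dots> = 1 + (P \<bullet> u)^2 / P0^2 - (norm u)^2" using pu PP u0e by (simp add: power_divide)
    finally show ?thesis .
  qed
  have ay: "1 / bY^2 = 1 + (P \<bullet> v)^2 / P0^2 - (norm v)^2"
  proof -
    have "1 / bY^2 = (Y0^2 - (norm Y)^2) / bY^2" using Y0 by simp
    also have "\<dots> = (Y0/bY)^2 - (norm ((1/bY) *\<^sub>R Y))^2"
      using bY(2) by (simp add: power_divide diff_divide_distrib power_mult_distrib)
    also have "\<dots> = (P0 + v0)^2 - (norm (P + v))^2" using Ys by simp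
    also have "\<dots> = P0^2 - P \<bullet> P + 2 * (P0 * v0 - P \<bullet> v) + v0^2 - (norm v)^2"
    proof -
      have "(norm (P + v))^2 = P \<bullet> P + 2 * (P \<bullet> v) + (norm v)^2"
        unfolding power2_norm_eq_inner by (simp add: inner_add_left inner_add_right inner_commute)
      then show ?thesis by (simp add: power2_eq_square algebra_simps)
    qed
    also have "\<dots> = 1 + (P \<bullet> v)^2 / P0^2 - (norm v)^2" using pv PP v0e by (simp add: power_divide)
    finally show ?thesis .
  qed
  have "(norm (V u - V v))^2 = (norm (u - v))^2 - (P \<bullet> (u - v))^2 / P0^2"
    using Vlin Vn by simp
  also have "\<dots> = (norm u)^2 + (norm v)^2 - 2 * (u \<bullet> v) - ((P \<bullet> u)^2 + (P \<bullet> v)^2 - 2 * (P \<bullet> u) * (P \<bullet> v)) / P0^2"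
  proof -
    have "(norm (u - v))^2 = (norm u)^2 + (norm v)^2 - 2 * (u \<bullet> v)"
      unfolding power2_norm_eq_inner by (simp add: inner_diff_left inner_diff_right inner_commute)
    moreover have "(P \<bullet> (u - v))^2 = (P \<bullet> u)^2 + (P \<bullet> v)^2 - 2 * (P \<bullet> u) * (P \<bullet> v)"
      by (simp add: inner_diff_right power2_eq_square algebra_simps)
    ultimately show ?thesis by simp
  qed
  finally have nd: "(norm (V u - V v))^2 = \<dots>" .
  have "2 * (X0 * Y0 - X \<bullet> Y) / (bX * bY) = (norm (V u - V v))^2 + 1 / bX^2 + 1 / bY^2"
  proof -
    have e1: "2 * (X0 * Y0 - X \<bullet> Y) / (bX * bY) = 2 * ((X0 * Y0 - X \<bullet> Y) / (bX * bY))" by simp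
    have e2: "((P \<bullet> u)^2 + (P \<bullet> v)^2 - 2 * (P \<bullet> u) * (P \<bullet> v)) / P0^2
       = (P \<bullet> u)^2 / P0^2 + (P \<bullet> v)^2 / P0^2 - 2 * ((P \<bullet> u) * (P \<bullet> v) / P0^2)"
      by (simp add: add_divide_distrib diff_divide_distrib)
    show ?thesis unfolding e1 using main ax ay nd e2 by linarith
  qed
  then show ?thesis unfolding V_def u_def v_def lam_def .
qed

definition VV :: "'a::euclidean_space \<Rightarrow> 'a \<Rightarrow> 'a" where
  "VV p x = (1/chd p x) *\<^sub>R hv x - hv p
     - ((1/(h0 p*(h0 p+1))) * (hv p \<bullet> ((1/chd p x) *\<^sub>R hv x - hv p))) *\<^sub>R hv p"

lemma chd_sym: "chd x y = chd y x"
  unfolding chd_def by (simp add: norm_minus_commute mult.commute)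

lemma chd_self: "chd x x = 1"
  unfolding chd_def by simp

lemma key:
  assumes "p \<in> hyp_space" "x \<in> hyp_space" "y \<in> hyp_space"
  shows "2 * chd x y / (chd p x * chd p y) = (norm (VV p x - VV p y))^2 + 1/(chd p x)^2 + 1/(chd p y)^2"
proof -
  have "2 * (h0 x * h0 y - hv x \<bullet> hv y) / (chd p x * chd p y) = (norm (VV p x - VV p y))^2 + 1/(chd p x)^2 + 1/(chd p y)^2"
    unfolding VV_def
    by (rule key_abs) (use assms chd_ge1[of p x] chd_ge1[of p y] in
        \<open>auto simp: h0_pos h0_sq chd_h\<close>)
  then show ?thesis using chd_h[OF assms(2,3)] by simp
qed

lemma VV_self: "p \<in> hyp_space \<Longrightarrow> VV p p = 0"
  unfolding VV_def chd_self by simp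

lemma VV_norm2: assumes "p \<in> hyp_space" "x \<in> hyp_space"
  shows "(norm (VV p x))^2 = 1 - 1/(chd p x)^2"
proof -
  have c: "chd p x \<ge> 1" using chd_ge1 assms by blast
  have "2 * chd x p / (chd p x * chd p p) = (norm (VV p x - VV p p))^2 + 1/(chd p x)^2 + 1/(chd p p)^2"
    by (rule key) (use assms in auto)
  then have "2 = (norm (VV p x))^2 + 1/(chd p x)^2 + 1"
    using c VV_self[OF assms(1)] by (simp add: chd_self chd_sym)
  then show ?thesis by simp
qed

lemma tri_alg:
  fixes ca cb sa sb :: real
  assumes "ca > 0" "cb > 0" "ca^2 = sa^2 + 1" "cb^2 = sb^2 + 1"
  shows "(sa / ca + sb / cb)^2 + 1/ca^2 + 1/cb^2 = 2 * (ca * cb + sa * sb) / (ca * cb)"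
proof -
  have "(sa / ca + sb / cb)^2 + 1/ca^2 + 1/cb^2 = (sa^2 + 1)/ca^2 + (sb^2+1)/cb^2 + 2 * (sa * sb)/(ca * cb)"
    using assms(1,2) by (simp add: power2_eq_square field_simps)
  also have "\<dots> = 2 + 2 * (sa * sb)/(ca * cb)"
  proof -
    have "sa^2 + 1 > 0" "sb^2 + 1 > 0" by (smt (verit) zero_le_power2)+
    then show ?thesis using assms by simp
  qed
  also have "\<dots> = 2 * (ca * cb + sa * sb) / (ca * cb)" using assms(1,2) by (simp add: field_simps)
  finally show ?thesis .
qed

lemma hdist_triangle:
  assumes x: "x \<in> hyp_space" and y: "y \<in> hyp_space" and z: "z \<in> hyp_space"
  shows "hdist x z \<le> hdist x y + hdist y z"
proof -
  define a where "a = hdist y x"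
  define b where "b = hdist y z"
  have a0: "a \<ge> 0" "b \<ge> 0" unfolding a_def b_def using hdist_nonneg assms by auto
  have ca: "chd y x = cosh a" "chd y z = cosh b" unfolding a_def b_def using cosh_hdist[OF y x] cosh_hdist[OF y z] by auto
  have cpos: "cosh a > 0" "cosh b > 0" using cosh_real_ge_1[of a] cosh_real_ge_1[of b] by auto
  have sa: "sinh a \<ge> 0" "sinh b \<ge> 0" using a0 by auto
  have nx: "norm (VV y x) = sinh a / cosh a"
  proof -
    have "(norm (VV y x))^2 = 1 - 1/(cosh a)^2" using VV_norm2[OF y x] ca by simp
    also have "\<dots> = ((cosh a)^2 - 1)/(cosh a)^2" using cpos by (simp add: field_simps)
    also have "\<dots> = (sinh a / cosh a)^2" using cosh_square_eq[of a]
      by (simp add: power_divide)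
    finally show ?thesis using sa cpos
      by (metis divide_nonneg_pos norm_ge_zero power2_eq_iff_nonneg)
  qed
  have nz: "norm (VV y z) = sinh b / cosh b"
  proof -
    have "(norm (VV y z))^2 = 1 - 1/(cosh b)^2" using VV_norm2[OF y z] ca by simp
    also have "\<dots> = ((cosh b)^2 - 1)/(cosh b)^2" using cpos by (simp add: field_simps)
    also have "\<dots> = (sinh b / cosh b)^2" using cosh_square_eq[of b]
      by (simp add: power_divide)
    finally show ?thesis using sa cpos
      by (metis divide_nonneg_pos norm_ge_zero power2_eq_iff_nonneg)
  qed
  have k: "2 * chd x z / (cosh a * cosh b) = (norm (VV y x - VV y z))^2 + 1/(cosh a)^2 + 1/(cosh b)^2"
    using key[OF y x z] ca by simp
  have "(norm (VV y x - VV y z))^2 \<le> (sinh a / cosh a + sinh b / cosh b)^2"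
    using norm_triangle_ineq4[of "VV y x" "VV y z"] nx nz
    by (intro power_mono) auto
  then have "2 * chd x z / (cosh a * cosh b) \<le> (sinh a / cosh a + sinh b / cosh b)^2 + 1/(cosh a)^2 + 1/(cosh b)^2"
    using k by linarith
  also have "\<dots> = 2 * (cosh a * cosh b + sinh a * sinh b) / (cosh a * cosh b)"
    using tri_alg[OF cpos cosh_square_eq[of a] cosh_square_eq[of b]] by simp
  finally have "chd x z \<le> cosh a * cosh b + sinh a * sinh b"
    using cpos by (simp add: divide_le_cancel mult_pos_pos)
  then have "cosh (hdist x z) \<le> cosh (a + b)" using cosh_hdist[OF x z] by (simp add: cosh_add)
  then have "hdist x z \<le> a + b"
    using cosh_real_nonneg_le_iff hdist_nonneg[OF x z] a0 by simp
  then show ?thesis unfolding a_def b_def by (simp add: hdist_sym)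
qed

lemma norm_telescope:
  fixes f :: "nat \<Rightarrow> 'a::real_normed_vector"
  shows "norm (f 0 - f m) \<le> (\<Sum>i<m. norm (f i - f (Suc i)))"
proof (induction m)
  case 0 then show ?case by simp
next
  case (Suc m)
  have "norm (f 0 - f (Suc m)) \<le> norm (f 0 - f m) + norm (f m - f (Suc m))"
    using norm_triangle_ineq[of "f 0 - f m" "f m - f (Suc m)"] by simp
  then show ?case using Suc by simp
qed

lemma sqrt3: "a \<ge> 0 \<Longrightarrow> b \<ge> 0 \<Longrightarrow> c \<ge> 0 \<Longrightarrow> sqrt (a + b + c) \<le> sqrt a + sqrt b + sqrt c"
proof -
  assume h: "a \<ge> 0" "b \<ge> 0" "c \<ge> 0"
  have "sqrt (a + b + c) \<le> sqrt (a + b) + sqrt c" using h by (intro sqrt_add_le_add_sqrt) auto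
  also have "sqrt (a + b) \<le> sqrt a + sqrt b" using h by (intro sqrt_add_le_add_sqrt) auto
  finally show ?thesis by simp
qed

definition RR :: "'a::euclidean_space \<Rightarrow> 'a \<Rightarrow> 'a \<Rightarrow> real" where
  "RR p x y = 2 * chd x y / (chd p x * chd p y)"

lemma chain_ineq:
  assumes p: "p \<in> hyp_space" and ys: "\<forall>i\<le>m. ys i \<in> hyp_space" and m: "m \<ge> 1"
  shows "sqrt (RR p (ys 0) (ys m)) \<le> 3 * (\<Sum>i<m. sqrt (RR p (ys i) (ys (Suc i))))"
proof -
  define V where "V i = VV p (ys i)" for i
  define al where "al i = 1 / (chd p (ys i))^2" for i
  have al0: "al i \<ge> 0" for i unfolding al_def by simp
  have R: "RR p (ys i) (ys j) = (norm (V i - V j))^2 + al i + al j" if "i \<le> m" "j \<le> m" for i j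
    unfolding RR_def V_def al_def using key[OF p, of "ys i" "ys j"] ys that by simp
  define S where "S = (\<Sum>i<m. sqrt (RR p (ys i) (ys (Suc i))))"
  have step: "norm (V i - V (Suc i)) \<le> sqrt (RR p (ys i) (ys (Suc i)))" 
     "sqrt (al i) \<le> sqrt (RR p (ys i) (ys (Suc i)))"
     "sqrt (al (Suc i)) \<le> sqrt (RR p (ys i) (ys (Suc i)))" if "i < m" for i
  proof -
    have e: "RR p (ys i) (ys (Suc i)) = (norm (V i - V (Suc i)))^2 + al i + al (Suc i)"
      using R that by simp
    show "norm (V i - V (Suc i)) \<le> sqrt (RR p (ys i) (ys (Suc i)))"
      unfolding e using al0 by (intro real_le_rsqrt) (auto simp: add_nonneg_nonneg)
    show "sqrt (al i) \<le> sqrt (RR p (ys i) (ys (Suc i)))" unfolding e using al0[of "Suc i"]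
      by (intro real_sqrt_le_mono) simp
    show "sqrt (al (Suc i)) \<le> sqrt (RR p (ys i) (ys (Suc i)))" unfolding e using al0[of i]
      by (intro real_sqrt_le_mono) simp
  qed
  have Snn: "sqrt (RR p (ys i) (ys (Suc i))) \<le> S" if "i < m" for i
  proof -
    have "RR p (ys j) (ys (Suc j)) \<ge> 0" if "j < m" for j
      using R[of j "Suc j"] that al0[of j] al0[of "Suc j"] by simp
    then show ?thesis unfolding S_def by (intro member_le_sum) (use that in auto)
  qed
  have "sqrt (RR p (ys 0) (ys m)) \<le> norm (V 0 - V m) + sqrt (al 0) + sqrt (al m)"
    using R[of 0 m] sqrt3[of "(norm (V 0 - V m))^2" "al 0" "al m"] al0 by simp
  also have "norm (V 0 - V m) \<le> S"
  proof -
    have "(\<Sum>i<m. norm (V i - V (Suc i))) \<le> S" unfolding S_def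
      by (rule sum_mono) (use step(1) in auto)
    then show ?thesis using norm_telescope[of V m] by linarith
  qed
  also have "sqrt (al 0) \<le> S"
  proof -
    have "0 < m" using m by simp
    from step(2)[OF this] Snn[OF this] show ?thesis by linarith
  qed
  also have "sqrt (al m) \<le> S"
  proof -
    have mm: "m - 1 < m" "Suc (m - 1) = m" using m by auto
    from step(3)[OF mm(1)] Snn[OF mm(1)] show ?thesis unfolding mm(2) by linarith
  qed
  finally show ?thesis unfolding S_def by simp
qed

lemma geodesic_prop:
  assumes "p \<in> geodesic_seg x y"
  shows "hdist x p + hdist p y = hdist x y"
proof -
  obtain \<gamma> where g: "p \<in> \<gamma> ` {0..hdist x y}" "\<gamma> 0 = x" "\<gamma> (hdist x y) = y"
    "\<forall>s\<in>{0..hdist x y}. \<forall>t\<in>{0..hdist x y}. hdist (\<gamma> s) (\<gamma> t) = \<bar>s - t\<bar>"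
    using assms unfolding geodesic_seg_def by blast
  then obtain s where s: "s \<in> {0..hdist x y}" "p = \<gamma> s" by auto
  have s0: "0 \<in> {0..hdist x y}" "hdist x y \<in> {0..hdist x y}" using s by auto
  have "hdist x p = \<bar>0 - s\<bar>" using g(2) g(4) s0(1) s by metis
  then have "hdist x p = s" using s by simp
  moreover have "hdist p y = \<bar>s - hdist x y\<bar>" using g(3) g(4) s0(2) s by metis
  then have "hdist p y = hdist x y - s" using s by simp
  ultimately show ?thesis by simp
qed

lemma geodesic_in:
  assumes "p \<in> geodesic_seg x y"
  shows "p \<in> hyp_space"
proof -
  obtain \<gamma> where g: "p \<in> \<gamma> ` {0..hdist x y}" "\<forall>s\<in>{0..hdist x y}. \<gamma> s \<in> hyp_space"
    using assms unfolding geodesic_seg_def by blast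
  then show ?thesis by auto
qed

lemma RR_geod:
  assumes x: "x \<in> hyp_space" and y: "y \<in> hyp_space" and p: "p \<in> geodesic_seg x y"
  shows "RR p x y \<ge> 2"
proof -
  have pin: "p \<in> hyp_space" using geodesic_in[OF p] .
  define a where "a = hdist p x"
  define b where "b = hdist p y"
  have ab: "a \<ge> 0" "b \<ge> 0" using hdist_nonneg pin x y unfolding a_def b_def by auto
  have "hdist x y = a + b" using geodesic_prop[OF p] unfolding a_def b_def by (simp add: hdist_sym)
  then have "chd x y = cosh a * cosh b + sinh a * sinh b" using cosh_hdist[OF x y] by (simp add: cosh_add)
  moreover have "chd p x = cosh a" "chd p y = cosh b"
    using cosh_hdist[OF pin x] cosh_hdist[OF pin y] unfolding a_def b_def by auto
  moreover have "sinh a * sinh b \<ge> 0" using ab by simp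
  moreover have "cosh a > 0" "cosh b > 0" using cosh_real_ge_1[of a] cosh_real_ge_1[of b] by auto
  ultimately show ?thesis unfolding RR_def by (simp add: field_simps)
qed

lemma shorten:
  fixes xs :: "nat \<Rightarrow> 'a" and R :: "'a \<Rightarrow> 'a \<Rightarrow> bool"
  assumes "\<forall>i<m. R (xs i) (xs (Suc i))"
  shows "\<exists>m' ys. ys 0 = xs 0 \<and> ys m' = xs m \<and> (\<forall>i\<le>m'. \<exists>j\<le>m. ys i = xs j)
           \<and> (\<forall>i<m'. R (ys i) (ys (Suc i))) \<and> inj_on ys {..m'}"
  using assms
proof (induction m arbitrary: xs rule: less_induct)
  case (less m)
  show ?case
  proof (cases "inj_on xs {..m}")
    case True
    then show ?thesis using less.prems by (intro exI[of _ m] exI[of _ xs]) auto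
  next
    case False
    then obtain i j where ij: "i \<le> m" "j \<le> m" "i \<noteq> j" "xs i = xs j"
      unfolding inj_on_def by auto
    then obtain i j where ij: "i < j" "j \<le> m" "xs i = xs j"
      by (metis linorder_neqE_nat order_le_less_trans less_imp_le)
    define zs where "zs k = (if k \<le> i then xs k else xs (k + (j - i)))" for k
    define m2 where "m2 = m - (j - i)"
    have m2: "m2 < m" unfolding m2_def using ij by auto
    have z0: "zs 0 = xs 0" unfolding zs_def by simp
    have zm: "zs m2 = xs m"
    proof (cases "m2 \<le> i")
      case True
      then have "m = j" unfolding m2_def using ij by auto
      moreover have "m2 = i" using True ij unfolding m2_def by auto
      ultimately show ?thesis unfolding zs_def using ij by simp
    next
      case False
      then show ?thesis unfolding zs_def m2_def using ij by auto
    qed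
    have zR: "\<forall>k<m2. R (zs k) (zs (Suc k))"
    proof (intro allI impI)
      fix k assume k: "k < m2"
      show "R (zs k) (zs (Suc k))"
      proof (cases "k < i")
        case True
        then show ?thesis unfolding zs_def using less.prems ij by auto
      next
        case False
        show ?thesis
        proof (cases "k = i")
          case True
          have "j < m" using k True ij unfolding m2_def by auto
          then have "R (xs j) (xs (Suc j))" using less.prems by auto
          moreover have "Suc i + (j - i) = Suc j" using ij by auto
          ultimately show ?thesis unfolding zs_def using True ij by auto
        next
          case False
          then have "k > i" using \<open>\<not> k < i\<close> by auto
          moreover have "k + (j - i) < m" using k ij unfolding m2_def by auto
          ultimately show ?thesis unfolding zs_def using less.prems by auto
        qed
      qed
    qed
    obtain m' ys where ys: "ys 0 = zs 0" "ys m' = zs m2" "\<forall>i\<le>m'. \<exists>j\<le>m2. ys i = zs j"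
      "\<forall>i<m'. R (ys i) (ys (Suc i))" "inj_on ys {..m'}"
      using less.IH[OF m2 zR] by blast
    have "\<forall>k\<le>m'. \<exists>l\<le>m. ys k = xs l"
    proof (intro allI impI)
      fix k assume "k \<le> m'"
      then obtain l where l: "l \<le> m2" "ys k = zs l" using ys(3) by blast
      show "\<exists>l\<le>m. ys k = xs l"
      proof (cases "l \<le> i")
        case True then show ?thesis using l ij by (intro exI[of _ l]) (auto simp: zs_def)
      next
        case False then show ?thesis using l ij
          by (intro exI[of _ "l + (j - i)"]) (auto simp: zs_def m2_def)
      qed
    qed
    then show ?thesis using ys z0 zm by (intro exI[of _ m'] exI[of _ ys]) auto
  qed
qed

lemma eucl_pack:
  fixes S :: "'a::euclidean_space set" and c :: 'a
  assumes fin: "finite S" and rho: "\<rho> > 0" and eps: "\<epsilon> > 0" and A: "A \<ge> 0"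
    and sub: "S \<subseteq> cball c (A * \<rho>)"
    and sep: "\<forall>y\<in>S. \<forall>z\<in>S. y \<noteq> z \<longrightarrow> \<epsilon> * \<rho> \<le> dist y z"
  shows "real (card S) \<le> (2 * (A + \<epsilon>) / \<epsilon>) ^ DIM('a)"
proof -
  define r where "r = \<epsilon> * \<rho> / 2"
  have r: "r > 0" unfolding r_def using eps rho by simp
  define V where "V = unit_ball_vol (real DIM('a))"
  have V: "V > 0" unfolding V_def by simp
  have fm: "emeasure lborel (ball x s) \<noteq> \<infinity>" if "s \<ge> 0" for x :: 'a and s
    using emeasure_ball[OF that, of x] by simp
  have mb: "measure lborel (ball x s) = V * s ^ DIM('a)" if "s \<ge> 0" for x :: 'a and s
    using content_ball[OF that, of x] unfolding V_def by simp
  have disj: "disjoint_family_on (\<lambda>y. ball y r) S"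
    unfolding disjoint_family_on_def
  proof (intro ballI impI)
    fix y z assume "y \<in> S" "z \<in> S" "y \<noteq> z"
    then have "\<epsilon> * \<rho> \<le> dist y z" using sep by blast
    then show "ball y r \<inter> ball z r = {}" unfolding r_def
      by (auto simp: dist_commute) (smt (verit) dist_triangle dist_commute)
  qed
  have "measure lborel (\<Union>y\<in>S. ball y r) = (\<Sum>y\<in>S. measure lborel (ball y r))"
    by (rule measure_finite_Union[OF fin _ disj]) (use r fm in auto)
  also have "\<dots> = real (card S) * (V * r ^ DIM('a))" using mb r by simp
  finally have e1: "measure lborel (\<Union>y\<in>S. ball y r) = real (card S) * (V * r ^ DIM('a))" .
  have subs: "(\<Union>y\<in>S. ball y r) \<subseteq> ball c ((A + \<epsilon>) * \<rho>)"
  proof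
    fix x assume "x \<in> (\<Union>y\<in>S. ball y r)"
    then obtain y where y: "y \<in> S" "dist y x < r" by auto
    have "dist c y \<le> A * \<rho>" using sub y(1) by auto
    then have "dist c x < A * \<rho> + r" using y(2) dist_triangle[of c x y] by linarith
    also have "\<dots> \<le> (A + \<epsilon>) * \<rho>" unfolding r_def using eps rho by (simp add: algebra_simps)
    finally show "x \<in> ball c ((A + \<epsilon>) * \<rho>)" by simp
  qed
  have "measure lborel (\<Union>y\<in>S. ball y r) \<le> measure lborel (ball c ((A + \<epsilon>) * \<rho>))"
  proof (rule measure_mono_fmeasurable[OF subs])
    have "open (\<Union>y\<in>S. ball y r)" by (intro open_UN) auto
    then show "(\<Union>y\<in>S. ball y r) \<in> sets lborel" by simp
    show "ball c ((A + \<epsilon>) * \<rho>) \<in> fmeasurable lborel"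
      using fm[of "(A + \<epsilon>) * \<rho>" c] A eps rho by (simp add: fmeasurable_def less_top)
  qed
  also have "\<dots> = V * ((A + \<epsilon>) * \<rho>) ^ DIM('a)" using mb A eps rho by simp
  finally have "real (card S) * (V * r ^ DIM('a)) \<le> V * ((A + \<epsilon>) * \<rho>) ^ DIM('a)" using e1 by simp
  then have "V * (real (card S) * r ^ DIM('a)) \<le> V * ((A + \<epsilon>) * \<rho>) ^ DIM('a)"
    by (simp only: mult.left_commute)
  then have "real (card S) * r ^ DIM('a) \<le> ((A + \<epsilon>) * \<rho>) ^ DIM('a)"
    using V by (rule mult_left_le_imp_le)
  then have "real (card S) \<le> ((A + \<epsilon>) * \<rho>) ^ DIM('a) / r ^ DIM('a)"
    using r by (subst pos_le_divide_eq) auto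
  also have "\<dots> = (((A + \<epsilon>) * \<rho>) / r) ^ DIM('a)" by (rule power_divide[symmetric])
  also have "((A + \<epsilon>) * \<rho>) / r = 2 * (A + \<epsilon>) / \<epsilon>" unfolding r_def using eps rho
    by (simp add: field_simps)
  finally show ?thesis .
qed

lemma real1:
  fixes K0 w v e :: real
  assumes "K0 \<ge> 0" "w > 0" "v > 0" "e \<ge> 0" "e^2 \<le> K0 * w * v" "v \<le> w + 2 * e"
  shows "e \<le> (2 * K0 + 1) * w"
proof (rule ccontr)
  assume "\<not> ?thesis"
  then have h: "e > (2 * K0 + 1) * w" by simp
  have "(2 * K0 + 1) * w > 0" using assms by simp
  then have e0: "e > 0" using h by linarith
  have "e * e > e * ((2 * K0 + 1) * w)" using h e0 by (intro mult_strict_left_mono) auto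
  moreover have "K0 * w * v \<le> K0 * w * (w + 2 * e)" using assms by (intro mult_left_mono) auto
  ultimately have "w * e < K0 * w * w" using assms(5) by (simp add: power2_eq_square algebra_simps)
  then have "e < K0 * w" using assms(2) by (simp add: mult.commute mult.left_commute)
  moreover have "K0 * w \<le> (2 * K0 + 1) * w" using assms by (intro mult_right_mono) auto
  ultimately show False using h by linarith
qed

lemma real2:
  fixes K0 w v e :: real
  assumes "K0 \<ge> 0" "w > 0" "v > 0" "e \<ge> 0" "e^2 \<le> K0 * w * v" "w \<le> v + 2 * e"
  shows "v \<ge> w / (16 * (K0 + 1))"
proof (rule ccontr)
  assume "\<not> ?thesis"
  then have h: "v < w / (16 * (K0 + 1))" by simp
  have k1: "K0 + 1 > 0" using assms by simp
  have "K0 * w * v \<le> K0 * w * (w / (16 * (K0 + 1)))" using h assms by (intro mult_left_mono) auto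
  also have "\<dots> = (w * w / 16) * (K0 / (K0 + 1))" by (simp add: ac_simps)
  also have "\<dots> \<le> (w * w / 16) * 1" using assms k1 by (intro mult_left_mono) auto
  finally have "e^2 \<le> (w / 4)^2" using assms(5) by (simp add: power2_eq_square)
  then have "e \<le> w / 4" by (rule power2_le_imp_le) (use assms(2) in simp)
  moreover have "w / (16 * (K0 + 1)) \<le> w / 16" using assms by (intro divide_left_mono) auto
  ultimately show False using h assms(6) assms(2) by linarith
qed

lemma realdiv:
  fixes D E c :: real
  assumes "2 * E / D \<le> c - 1" "D > 0"
  shows "E \<le> (c - 1) / 2 * D"
  using assms by (simp add: pos_divide_le_eq field_simps)

lemma hball_facts:
  assumes u: "u \<in> hyp_space" and y: "y \<in> hball u t"
  shows "y \<in> hyp_space" "(norm (u - y))^2 \<le> (cosh t - 1) / 2 * (1 - (norm u)^2) * (1 - (norm y)^2)"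
    "\<bar>(1 - (norm u)^2) - (1 - (norm y)^2)\<bar> \<le> 2 * norm (u - y)"
proof -
  show yh: "y \<in> hyp_space" using y unfolding hball_def by auto
  have "hdist u y \<le> t" using y unfolding hball_def by auto
  then have "cosh (hdist u y) \<le> cosh t"
    using hdist_nonneg[OF u yh] by (simp add: cosh_real_nonneg_le_iff)
  then have "chd u y \<le> cosh t" using cosh_hdist[OF u yh] by simp
  then have "2 * (norm (u - y))^2 / ((1 - (norm u)^2) * (1 - (norm y)^2)) \<le> cosh t - 1"
    unfolding chd_def by simp
  moreover have "(1 - (norm u)^2) * (1 - (norm y)^2) > 0" using hs_den[OF u] hs_den[OF yh] by simp
  ultimately show "(norm (u - y))^2 \<le> (cosh t - 1) / 2 * (1 - (norm u)^2) * (1 - (norm y)^2)"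
    using realdiv[of "(norm (u - y))^2" "(1 - (norm u)^2) * (1 - (norm y)^2)" "cosh t"]
    by (simp only: mult.assoc)
  have "\<bar>(1 - (norm u)^2) - (1 - (norm y)^2)\<bar> = \<bar>norm y - norm u\<bar> * (norm y + norm u)"
  proof -
    have "(1 - (norm u)^2) - (1 - (norm y)^2) = (norm y - norm u) * (norm y + norm u)"
      by (simp add: power2_eq_square algebra_simps)
    then show ?thesis by (simp add: abs_mult)
  qed
  also have "\<dots> \<le> norm (u - y) * 2"
    using hs_norm[OF u] hs_norm[OF yh] norm_triangle_ineq3[of u y]
    by (intro mult_mono) (auto simp: norm_minus_commute)
  finally show "\<bar>(1 - (norm u)^2) - (1 - (norm y)^2)\<bar> \<le> 2 * norm (u - y)" by simp
qed

lemma hyp_pack: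
  assumes d: "\<delta> > 0" and t: "t \<ge> 0"
  shows "\<exists>K. \<forall>u\<in>(hyp_space::'a::euclidean_space set). \<forall>S. finite S \<and> S \<subseteq> hball u t \<and>
           (\<forall>y\<in>S. \<forall>z\<in>S. y \<noteq> z \<longrightarrow> \<delta> \<le> hdist y z) \<longrightarrow> real (card S) \<le> K"
proof -
  define K0 where "K0 = (cosh t - 1) / 2"
  have K0: "K0 \<ge> 0" unfolding K0_def using cosh_real_ge_1[of t] by simp
  define a where "a = 1 / (16 * (K0 + 1))"
  have a: "a > 0" unfolding a_def using K0 by simp
  define \<epsilon> where "\<epsilon> = a * sqrt ((cosh \<delta> - 1) / 2)"
  have cd: "cosh \<delta> > 1" using d cosh_real_nonneg_less_iff[of 0 \<delta>] by simp
  have eps: "\<epsilon> > 0" unfolding \<epsilon>_def using a cd by simp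
  define A where "A = 2 * K0 + 1"
  have A: "A \<ge> 0" unfolding A_def using K0 by simp
  show ?thesis
  proof (intro exI[of _ "(2 * (A + \<epsilon>) / \<epsilon>) ^ DIM('a)"] ballI allI impI)
    fix u :: 'a and S assume u: "u \<in> hyp_space" and
      S: "finite S \<and> S \<subseteq> hball u t \<and> (\<forall>y\<in>S. \<forall>z\<in>S. y \<noteq> z \<longrightarrow> \<delta> \<le> hdist y z)"
    define w where "w = 1 - (norm u)^2"
    have w: "w > 0" unfolding w_def using hs_den[OF u] .
    have yfacts: "y \<in> hyp_space \<and> norm (u - y) \<le> A * w \<and> 1 - (norm y)^2 \<ge> a * w" if "y \<in> S" for y
    proof -
      have yh: "y \<in> hball u t" using S that by auto
      note f = hball_facts[OF u yh]
      have v: "1 - (norm y)^2 > 0" using hs_den[OF f(1)] .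
      have e2: "(norm (u - y))^2 \<le> K0 * w * (1 - (norm y)^2)" using f(2) unfolding K0_def w_def .
      have "norm (u - y) \<le> (2 * K0 + 1) * w"
        by (rule real1[OF K0 w v norm_ge_zero e2]) (use f(3) w_def in auto)
      moreover have "1 - (norm y)^2 \<ge> w / (16 * (K0 + 1))"
        by (rule real2[OF K0 w v norm_ge_zero e2]) (use f(3) w_def in auto)
      ultimately show ?thesis using f(1) unfolding A_def a_def by simp
    qed
    show "real (card S) \<le> (2 * (A + \<epsilon>) / \<epsilon>) ^ DIM('a)"
    proof (rule eucl_pack[of S w \<epsilon> A u])
      show "finite S" using S by simp
      show "0 < w" "0 < \<epsilon>" "0 \<le> A" using w eps A by auto
      show "S \<subseteq> cball u (A * w)" using yfacts by (auto simp: dist_norm)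
      show "\<forall>y\<in>S. \<forall>z\<in>S. y \<noteq> z \<longrightarrow> \<epsilon> * w \<le> dist y z"
      proof (intro ballI impI)
        fix y z assume yz: "y \<in> S" "z \<in> S" "y \<noteq> z"
        have yh: "y \<in> hyp_space" "z \<in> hyp_space" using yfacts yz by auto
        have vy: "1 - (norm y)^2 \<ge> a * w" "1 - (norm z)^2 \<ge> a * w" using yfacts yz by auto
        have "\<delta> \<le> hdist y z" using S yz by auto
        then have "cosh \<delta> \<le> chd y z"
          using cosh_hdist[OF yh] cosh_real_nonneg_le_iff[of \<delta> "hdist y z"] d hdist_nonneg[OF yh] by simp
        then have "(cosh \<delta> - 1) \<le> 2 * (norm (y - z))^2 / ((1 - (norm y)^2) * (1 - (norm z)^2))"
          unfolding chd_def by simp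
        then have "(cosh \<delta> - 1) * ((1 - (norm y)^2) * (1 - (norm z)^2)) \<le> 2 * (norm (y - z))^2"
          using hs_den[OF yh(1)] hs_den[OF yh(2)] by (simp add: pos_le_divide_eq)
        moreover have "(cosh \<delta> - 1) * ((a * w) * (a * w)) \<le> (cosh \<delta> - 1) * ((1 - (norm y)^2) * (1 - (norm z)^2))"
          using cd vy a w hs_den[OF yh(1)] hs_den[OF yh(2)] by (intro mult_left_mono mult_mono) auto
        ultimately have "(cosh \<delta> - 1) / 2 * (a * w)^2 \<le> (norm (y - z))^2"
          by (simp add: power2_eq_square)
        then have "sqrt ((cosh \<delta> - 1) / 2 * (a * w)^2) \<le> norm (y - z)"
          by (metis real_sqrt_le_mono real_sqrt_abs abs_norm_cancel)
        moreover have "sqrt ((cosh \<delta> - 1) / 2 * (a * w)^2) = \<epsilon> * w"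
        proof -
          have "sqrt ((cosh \<delta> - 1) / 2 * (a * w)^2) = sqrt ((cosh \<delta> - 1) / 2) * sqrt ((a * w)^2)"
            by (rule real_sqrt_mult)
          also have "sqrt ((a * w)^2) = a * w" using a w by simp
          finally show ?thesis unfolding \<epsilon>_def by (simp add: ac_simps)
        qed
        ultimately show "\<epsilon> * w \<le> dist y z" by (simp add: dist_norm)
      qed
    qed
  qed
qed

lemma growth:
  fixes U :: "'a::euclidean_space set"
  assumes Uh: "U \<subseteq> hyp_space" and sg: "subexp_growth U"
  shows "\<exists>C\<ge>1. \<forall>u\<in>U. \<forall>t\<ge>0. finite (U \<inter> hball u t) \<and> real (card (U \<inter> hball u t)) \<le> C * exp (t / 8)"
proof -
  obtain \<delta> where d: "\<delta> > 0" and sep: "\<forall>u\<in>U. \<forall>v\<in>U. u \<noteq> v \<longrightarrow> \<delta> \<le> hdist u v"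
    using sg unfolding subexp_growth_def uniformly_discrete_def by blast
  have lim: "((\<lambda>t. ln (SUP u\<in>U. real (card (U \<inter> hball u t))) / t) \<longlongrightarrow> 0) at_top"
    using sg unfolding subexp_growth_def by blast
  have finbd: "\<exists>K. \<forall>u\<in>U. finite (U \<inter> hball u t) \<and> real (card (U \<inter> hball u t)) \<le> K" if t: "t \<ge> 0" for t
  proof -
    obtain K where K: "\<forall>u\<in>(hyp_space::'a set). \<forall>S. finite S \<and> S \<subseteq> hball u t \<and>
           (\<forall>y\<in>S. \<forall>z\<in>S. y \<noteq> z \<longrightarrow> \<delta> \<le> hdist y z) \<longrightarrow> real (card S) \<le> K"
      using hyp_pack[OF d t] by blast
    have "finite (U \<inter> hball u t) \<and> real (card (U \<inter> hball u t)) \<le> K" if u: "u \<in> U" for u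
    proof -
      have uh: "u \<in> hyp_space" using u Uh by auto
      have fin: "finite (U \<inter> hball u t)"
      proof (rule ccontr)
        assume "\<not> finite (U \<inter> hball u t)"
        then obtain S where S: "finite S" "card S = nat \<lceil>K\<rceil> + 1" "S \<subseteq> U \<inter> hball u t"
          using infinite_arbitrarily_large by blast
        have "real (card S) \<le> K" using K uh S sep by (meson in_mono le_infE)
        then show False using S(2) by linarith
      qed
      moreover have "real (card (U \<inter> hball u t)) \<le> K"
        using K uh fin sep by (metis (no_types, lifting) Int_iff inf_le2)
      ultimately show ?thesis by simp
    qed
    then show ?thesis by blast
  qed
  define N where "N t = (SUP u\<in>U. real (card (U \<inter> hball u t)))" for t
  have cardN: "real (card (U \<inter> hball u t)) \<le> N t" if uU: "u \<in> U" and tt: "t \<ge> 0" for u t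
  proof -
    obtain K where "\<forall>u\<in>U. finite (U \<inter> hball u t) \<and> real (card (U \<inter> hball u t)) \<le> K"
      using finbd[OF tt] by blast
    then have "bdd_above ((\<lambda>u. real (card (U \<inter> hball u t))) ` U)" by (intro bdd_aboveI2) auto
    then show ?thesis unfolding N_def by (rule cSUP_upper[OF uU])
  qed
  have "eventually (\<lambda>t. ln (N t) / t < 1/8) at_top"
    using order_tendstoD(2)[OF lim[folded N_def], of "1/8"] by simp
  then obtain T0 where T0: "\<And>t. t \<ge> T0 \<Longrightarrow> ln (N t) / t < 1/8"
    unfolding eventually_at_top_linorder by blast
  define T where "T = max T0 1"
  have T: "T \<ge> 1" "T \<ge> T0" unfolding T_def by auto
  have big: "real (card (U \<inter> hball u t)) \<le> exp (t / 8)" if u: "u \<in> U" and tT: "t \<ge> T" for u t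
  proof -
    have t0: "t > 0" using T tT by linarith
    have c: "real (card (U \<inter> hball u t)) \<le> N t" using cardN[OF u] t0 by simp
    show ?thesis
    proof (cases "card (U \<inter> hball u t) = 0")
      case True then show ?thesis by simp
    next
      case False
      then have Npos: "N t > 0" using c by linarith
      have "ln (N t) / t < 1/8" using T0[of t] T tT by linarith
      then have "ln (N t) < t / 8" using t0 by (simp add: divide_less_eq)
      then have "N t < exp (t / 8)" using Npos by (metis exp_less_cancel_iff exp_ln)
      then show ?thesis using c by simp
    qed
  qed
  show ?thesis
  proof (intro exI[of _ "exp (T / 8)"] conjI ballI allI impI)
    show "1 \<le> exp (T / 8)" using T by simp
    fix u t assume u: "u \<in> U" and t: "(t::real) \<ge> 0"
    show "finite (U \<inter> hball u t)" using finbd[OF t] u by blast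
    show "real (card (U \<inter> hball u t)) \<le> exp (T / 8) * exp (t / 8)"
    proof (cases "t \<ge> T")
      case True
      then have "real (card (U \<inter> hball u t)) \<le> exp (t / 8)" using big u by blast
      also have "\<dots> \<le> exp (T / 8) * exp (t / 8)" using T by simp
      finally show ?thesis .
    next
      case False
      have "U \<inter> hball u t \<subseteq> U \<inter> hball u T" using False unfolding hball_def by auto
      moreover have "finite (U \<inter> hball u T)" using finbd[of T] T u by auto
      ultimately have "card (U \<inter> hball u t) \<le> card (U \<inter> hball u T)" by (rule card_mono[rotated])
      also have "real (card (U \<inter> hball u T)) \<le> exp (T / 8)" using big[OF u] by simp
      also have "\<dots> \<le> exp (T / 8) * exp (t / 8)" using t by simp
      finally show ?thesis by simp
    qed
  qed
qed

lemma geom_eq: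
  fixes q :: real
  shows "a \<le> b \<Longrightarrow> (\<Sum>k\<in>{a..<b}. q^k) * (1 - q) = q^a - q^b"
proof (induction b)
  case 0 then show ?case by simp
next
  case (Suc b)
  show ?case
  proof (cases "a = Suc b")
    case True then show ?thesis by simp
  next
    case False
    then have ab: "a \<le> b" using Suc.prems by simp
    have "(\<Sum>k\<in>{a..<Suc b}. q^k) = (\<Sum>k\<in>{a..<b}. q^k) + q^b" using ab by simp
    have "((\<Sum>k\<in>{a..<b}. q^k) + q^b) * (1 - q) = (\<Sum>k\<in>{a..<b}. q^k) * (1 - q) + q^b - q^Suc b"
      by (simp add: algebra_simps)
    then show ?thesis using Suc.IH[OF ab] \<open>(\<Sum>k\<in>{a..<Suc b}. q^k) = (\<Sum>k\<in>{a..<b}. q^k) + q^b\<close> by simp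
  qed
qed

lemma geom_bound:
  fixes q :: real
  assumes q: "0 \<le> q" "q < 1" and A: "finite A" "\<forall>k\<in>A. a \<le> k"
  shows "(\<Sum>k\<in>A. q^k) \<le> q^a / (1 - q)"
proof -
  define M where "M = Suc (Max (insert a A))"
  have sub: "A \<subseteq> {a..<M}"
  proof
    fix k assume "k \<in> A"
    then have "k \<le> Max (insert a A)" using A by simp
    moreover have "a \<le> k" using A \<open>k \<in> A\<close> by auto
    ultimately show "k \<in> {a..<M}" unfolding M_def by (simp add: less_Suc_eq_le)
  qed
  have aM: "a \<le> M" unfolding M_def using A by (simp add: le_SucI)
  have "(\<Sum>k\<in>A. q^k) \<le> (\<Sum>k\<in>{a..<M}. q^k)"
    by (rule sum_mono2) (use sub q in auto)
  also have "\<dots> = (q^a - q^M) / (1 - q)" using geom_eq[OF aM, of q] q by (simp add: field_simps)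
  also have "\<dots> \<le> q^a / (1 - q)" using q by (intro divide_right_mono) auto
  finally show ?thesis .
qed

lemma sum_bound:
  fixes U :: "'a::euclidean_space set"
  assumes Uh: "U \<subseteq> hyp_space"
    and C: "\<forall>u\<in>U. \<forall>t\<ge>0. finite (U \<inter> hball u t) \<and> real (card (U \<inter> hball u t)) \<le> C * exp (t / 8)"
    and C0: "C \<ge> 0" and p: "p \<in> hyp_space" and F: "F \<subseteq> U" "finite F" and far: "\<forall>u\<in>F. hdist p u > real k0"
  shows "(\<Sum>u\<in>F. exp (- hdist p u / 2)) \<le> C * exp (1/4) * (exp (-1/4))^k0 / (1 - exp (-1/4))"
proof -
  define q where "q = exp (-1/4::real)"
  have q: "0 \<le> q" "q < 1" unfolding q_def by auto
  define kk where "kk u = nat \<lfloor>hdist p u\<rfloor>" for u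
  have dnn: "hdist p u \<ge> 0" if "u \<in> F" for u using hdist_nonneg[OF p] Uh F that by auto
  have kkle: "real (kk u) \<le> hdist p u" "hdist p u < real (kk u) + 1" if "u \<in> F" for u
    unfolding kk_def using dnn[OF that] by linarith+
  have kkge: "k0 \<le> kk u" if "u \<in> F" for u
  proof -
    have "real k0 < hdist p u" using far that by auto
    then have "int k0 \<le> \<lfloor>hdist p u\<rfloor>" by (simp add: le_floor_iff)
    then show ?thesis unfolding kk_def by simp
  qed
  have "(\<Sum>u\<in>F. exp (- hdist p u / 2)) \<le> (\<Sum>u\<in>F. exp (- real (kk u) / 2))"
    by (rule sum_mono) (use kkle in auto)
  also have "\<dots> = (\<Sum>k\<in>kk ` F. (\<Sum>u\<in>{u\<in>F. kk u = k}. exp (- real (kk u) / 2)))"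
    by (rule sum.image_gen[OF F(2)])
  also have "\<dots> = (\<Sum>k\<in>kk ` F. real (card {u\<in>F. kk u = k}) * exp (- real k / 2))"
    by (rule sum.cong) auto
  also have "\<dots> \<le> (\<Sum>k\<in>kk ` F. C * exp (1/4) * q^k)"
  proof (rule sum_mono)
    fix k assume k: "k \<in> kk ` F"
    then obtain u0 where u0: "u0 \<in> F" "kk u0 = k" by auto
    have u0U: "u0 \<in> U" "u0 \<in> hyp_space" using u0 F Uh by auto
    define t where "t = 2 * real k + 2"
    have t: "t \<ge> 0" unfolding t_def by simp
    have sub: "{u\<in>F. kk u = k} \<subseteq> U \<inter> hball u0 t"
    proof
      fix u assume u: "u \<in> {u\<in>F. kk u = k}"
      then have uh: "u \<in> U" "u \<in> hyp_space" using F Uh by auto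
      have "hdist u0 u \<le> hdist u0 p + hdist p u" by (rule hdist_triangle[OF u0U(2) p uh(2)])
      also have "\<dots> = hdist p u0 + hdist p u" by (simp add: hdist_sym)
      also have "\<dots> \<le> t" using kkle[of u0] kkle[of u] u u0 unfolding t_def by auto
      finally show "u \<in> U \<inter> hball u0 t" using uh unfolding hball_def by auto
    qed
    have "real (card {u\<in>F. kk u = k}) \<le> real (card (U \<inter> hball u0 t))"
      using card_mono[OF _ sub] C u0U(1) t by auto
    also have "\<dots> \<le> C * exp (t / 8)" using C u0U(1) t by auto
    finally have cb: "real (card {u\<in>F. kk u = k}) \<le> C * exp (t / 8)" .
    have "real (card {u\<in>F. kk u = k}) * exp (- real k / 2) \<le> C * exp (t / 8) * exp (- real k / 2)"
      by (rule mult_right_mono[OF cb]) simp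
    also have "C * exp (t / 8) * exp (- real k / 2) = C * exp (1/4) * exp (real k * (-1/4))"
      unfolding t_def by (simp add: exp_add[symmetric] field_simps)
    also have "exp (real k * (-1/4)) = q^k" unfolding q_def by (rule exp_of_nat_mult)
    finally show "real (card {u\<in>F. kk u = k}) * exp (- real k / 2) \<le> C * exp (1/4) * q^k" .
  qed
  also have "\<dots> = C * exp (1/4) * (\<Sum>k\<in>kk ` F. q^k)" by (simp add: sum_distrib_left)
  also have "\<dots> \<le> C * exp (1/4) * (q^k0 / (1 - q))"
  proof (rule mult_left_mono)
    show "(\<Sum>k\<in>kk ` F. q^k) \<le> q^k0 / (1 - q)"
      by (rule geom_bound[OF q]) (use F kkge in auto)
    show "0 \<le> C * exp (1/4)" using C0 by simp
  qed
  finally show ?thesis unfolding q_def by simp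
qed

lemma cosh_lower: "exp (x::real) / 2 \<le> cosh x"
  unfolding cosh_field_def by (simp add: divide_right_mono)

lemma term_bound:
  assumes p: "p \<in> hyp_space" and x: "x \<in> hyp_space" and y: "y \<in> hyp_space"
    and r: "hdist x y \<le> r"
  shows "sqrt (RR p x y) \<le> sqrt (2 * cosh r) * (sqrt 2 * exp (- hdist p x / 2))"
proof -
  define D where "D = hdist p x"
  have h0: "hdist x y \<ge> 0" using hdist_nonneg[OF x y] .
  have "chd x y = cosh (hdist x y)" using cosh_hdist[OF x y] by simp
  also have "\<dots> \<le> cosh r" using h0 r cosh_real_nonneg_le_iff[of "hdist x y" r] by simp
  finally have c1: "chd x y \<le> cosh r" .
  have c2: "chd p x = cosh D" unfolding D_def using cosh_hdist[OF p x] by simp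
  have c3: "chd p y \<ge> 1" using chd_ge1[OF p y] .
  have cD: "cosh D \<ge> exp D / 2" by (rule cosh_lower)
  have cDp: "cosh D > 0" using cosh_real_ge_1[of D] by simp
  have "RR p x y = 2 * chd x y / (cosh D * chd p y)" unfolding RR_def c2 ..
  also have "\<dots> \<le> 2 * cosh r / (cosh D * 1)"
    using c1 c3 cDp chd_ge1[OF x y] by (intro frac_le mult_left_mono mult_pos_pos) auto
  also have "\<dots> \<le> 2 * cosh r / (exp D / 2)"
    using cD cosh_real_ge_1[of r] by (intro divide_left_mono) auto
  also have "\<dots> = (2 * cosh r) * (sqrt 2 * exp (- D / 2))^2"
  proof -
    have "(sqrt 2 * exp (- D / 2))^2 = 2 * (exp (- D / 2))^2" by (simp add: power_mult_distrib)
    also have "(exp (- D / 2))^2 = exp (- D)" by (simp add: exp_double[symmetric] power2_eq_square exp_add[symmetric])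
    finally have e: "(sqrt 2 * exp (- D / 2))^2 = 2 * exp (- D)" .
    show ?thesis unfolding e by (simp add: exp_minus field_simps)
  qed
  finally have "sqrt (RR p x y) \<le> sqrt ((2 * cosh r) * (sqrt 2 * exp (- D / 2))^2)"
    by (rule real_sqrt_le_mono)
  also have "\<dots> = sqrt (2 * cosh r) * (sqrt 2 * exp (- D / 2))"
    by (simp add: real_sqrt_mult)
  finally show ?thesis unfolding D_def .
qed

theorem lemma5p1:
  fixes U :: "'a::euclidean_space set" and r :: real
  assumes "U \<subseteq> hyp_space"
    and "r_connected U r"
    and "subexp_growth U"
  shows "\<exists>s::real. \<forall>(m::nat) (xs::nat \<Rightarrow> 'a) p.
           (\<forall>i\<le>m. xs i \<in> U) \<longrightarrow> (\<forall>i<m. hdist (xs i) (xs (Suc i)) \<le> r) \<longrightarrow>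
           p \<in> geodesic_seg (xs 0) (xs m) \<longrightarrow> (\<exists>i\<le>m. hdist (xs i) p \<le> s)"
proof -
  have Uh: "U \<subseteq> hyp_space" by fact
  obtain C where C1: "C \<ge> 1" and C: "\<forall>u\<in>U. \<forall>t\<ge>0. finite (U \<inter> hball u t) \<and> real (card (U \<inter> hball u t)) \<le> C * exp (t / 8)"
    using growth[OF assms(1,3)] by blast
  define q where "q = exp (-1/4::real)"
  have q: "0 < q" "q < 1" unfolding q_def by auto
  define B where "B = 3 * sqrt (2 * cosh r) * (C * exp (1/4) / (1 - q))"
  have Bpos: "B > 0" unfolding B_def using q C1 cosh_real_ge_1[of r] by simp
  obtain k0 where k0: "q^k0 < 1 / B" using real_arch_pow_inv[of "1/B" q] Bpos q by auto
  show ?thesis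
  proof (intro exI[of _ "real k0"] allI impI)
    fix m and xs :: "nat \<Rightarrow> 'a" and p
    assume xsU: "\<forall>i\<le>m. xs i \<in> U" and st: "\<forall>i<m. hdist (xs i) (xs (Suc i)) \<le> r"
      and pg: "p \<in> geodesic_seg (xs 0) (xs m)"
    show "\<exists>i\<le>m. hdist (xs i) p \<le> real k0"
    proof (rule ccontr)
      assume "\<not> ?thesis"
      then have far0: "\<forall>i\<le>m. hdist (xs i) p > real k0" by auto
      have ph: "p \<in> hyp_space" using geodesic_in[OF pg] .
      obtain m' ys where ys: "ys 0 = xs 0" "ys m' = xs m" "\<forall>i\<le>m'. \<exists>j\<le>m. ys i = xs j"
        "\<forall>i<m'. hdist (ys i) (ys (Suc i)) \<le> r" "inj_on ys {..m'}"
        using shorten[of m "\<lambda>a b. hdist a b \<le> r" xs] st by blast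
      have ysU: "ys i \<in> U" if "i \<le> m'" for i using ys(3) xsU that by fastforce
      have ysh: "ys i \<in> hyp_space" if "i \<le> m'" for i using ysU[OF that] Uh by auto
      have far: "hdist p (ys i) > real k0" if "i \<le> m'" for i
        using ys(3) far0 that hdist_sym by (metis)
      have x0h: "xs 0 \<in> hyp_space" "xs m \<in> hyp_space" using xsU Uh by auto
      have m1: "m' \<ge> 1"
      proof (rule ccontr)
        assume "\<not> m' \<ge> 1"
        then have "m' = 0" by simp
        then have "xs 0 = xs m" using ys(1,2) by simp
        then have "hdist (xs 0) p + hdist p (xs 0) = 0" using geodesic_prop[OF pg] by (simp add: hdist_self)
        then have "hdist (xs 0) p = 0" using hdist_nonneg[OF x0h(1) ph] hdist_sym[of p "xs 0"] by simp
        then show False using far0 by auto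
      qed
      have "sqrt 2 \<le> sqrt (RR p (xs 0) (xs m))"
        using RR_geod[OF x0h pg] by (simp add: real_sqrt_le_mono)
      also have "\<dots> \<le> 3 * (\<Sum>i<m'. sqrt (RR p (ys i) (ys (Suc i))))"
        using chain_ineq[OF ph _ m1, of ys] ysh ys(1,2) by auto
      also have "\<dots> \<le> 3 * (\<Sum>i<m'. sqrt (2 * cosh r) * (sqrt 2 * exp (- hdist p (ys i) / 2)))"
        by (intro mult_left_mono sum_mono term_bound[OF ph]) (use ysh ys(4) in auto)
      also have "\<dots> = 3 * sqrt (2 * cosh r) * sqrt 2 * (\<Sum>i<m'. exp (- hdist p (ys i) / 2))"
        by (simp add: sum_distrib_left mult.assoc)
      also have "(\<Sum>i<m'. exp (- hdist p (ys i) / 2)) = (\<Sum>u\<in>ys ` {..<m'}. exp (- hdist p u / 2))"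
      proof -
        have "inj_on ys {..<m'}" using ys(5) by (rule inj_on_subset) auto
        then show ?thesis by (simp add: sum.reindex)
      qed
      also have "\<dots> \<le> C * exp (1/4) * q^k0 / (1 - q)"
        unfolding q_def
        by (rule sum_bound[OF Uh C]) (use C1 ph ysU far in auto)
      finally have "sqrt 2 \<le> 3 * sqrt (2 * cosh r) * sqrt 2 * (C * exp (1/4) * q^k0 / (1 - q))"
        by (simp add: mult_left_mono)
      also have "\<dots> = sqrt 2 * (B * q^k0)" unfolding B_def by (simp add: field_simps)
      also have "\<dots> < sqrt 2 * 1"
      proof -
        have "B * q^k0 < B * (1 / B)" using k0 Bpos by (intro mult_strict_left_mono) auto
        then have "B * q^k0 < 1" using Bpos by simp
        then show ?thesis by simp
      qed
      finally show False by simp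
    qed
  qed
qed

end
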